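(* Let $n\ge 2$, let $T=\{1,\dots,n\}$ and let $\mathcal T$ be a topology on $T$. Fix an integer $k\ge 1$. Let $A,R,B,S\subseteq T\setminus\{n\}$ with $A\cap R=\emptyset$, $B\cap S=\emptyset$, where every point of $A$ and of $B$ is old (at stage $k$), every point of $R$ and of $S$ is new (at stage $k$), and $R\neq S$. Suppose $A\cup R$, $A\cup R\cup\{n\}$, $B\cup S$ and $B\cup S\cup\{n\}$ are all new $k$-systems of $\mathcal T$. Then $A$, $A\cup\{n\}$, $B$ and $B\cup\{n\}$ are all open in $\mathcal T$.
   Context: For $\alpha\in T$, $\alpha^{*}$ (the covering set of $\alpha$) denotes the smallest open set of $\mathcal T$ containing $\alpha$. For an integer $m\ge 0$, an $m$-system is an open set $P$ of $\mathcal T$ such that $P\setminus\{n\}$ has exactly $m$ points; it is upper if $n\notin P$ and lower if $n\in P$. For fixed $k$, a point $\alpha\neq n$ is called old if $\alpha^{*}$ is an $m$-system for some $m<k$, and new if $\alpha^{*}$ is a $k$-system. A $k$-system is called new if it contains at least one point $p\neq n$ that is not contained in any $m$-system with $m\le k-1$. *)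

theory Defs
  imports "HOL-Analysis.Analysis"
begin

text \<open>Topologies on T = {1..n} are values X :: nat topology with topspace X = {1..n}.
  The distinguished point is n.\<close>

definition covering_set :: "nat topology \<Rightarrow> nat \<Rightarrow> nat set" where
  "covering_set X a = \<Inter>{U. openin X U \<and> a \<in> U}"

definition m_system :: "nat topology \<Rightarrow> nat \<Rightarrow> nat \<Rightarrow> nat set \<Rightarrow> bool" where
  "m_system X n m P \<longleftrightarrow> openin X P \<and> card (P - {n}) = m"

definition old_point :: "nat topology \<Rightarrow> nat \<Rightarrow> nat \<Rightarrow> nat \<Rightarrow> bool" where
  "old_point X n k a \<longleftrightarrow> a \<noteq> n \<and> (\<exists>m<k. m_system X n m (covering_set X a))"

definition new_point :: "nat topology \<Rightarrow> nat \<Rightarrow> nat \<Rightarrow> nat \<Rightarrow> bool" where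
  "new_point X n k a \<longleftrightarrow> a \<noteq> n \<and> m_system X n k (covering_set X a)"

definition new_k_system :: "nat topology \<Rightarrow> nat \<Rightarrow> nat \<Rightarrow> nat set \<Rightarrow> bool" where
  "new_k_system X n k P \<longleftrightarrow> m_system X n k P \<and>
     (\<exists>p\<in>P. p \<noteq> n \<and> \<not> (\<exists>m Q. m \<le> k - 1 \<and> m_system X n m Q \<and> p \<in> Q))"

end

theory Submission
  imports Defs
begin

lemma cov_open:
  assumes "finite (topspace X)" "a \<in> topspace X"
  shows "openin X (covering_set X a)"
proof -
  have fin: "finite {U. openin X U \<and> a \<in> U}"
    by (rule finite_subset[of _ "Pow (topspace X)"]) (auto dest: openin_subset simp: assms)
  have ne: "{U. openin X U \<and> a \<in> U} \<noteq> {}" using assms by auto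
  show ?thesis unfolding covering_set_def
    by (rule openin_Inter[OF fin ne]) auto
qed

lemma cov_sub: "openin X U \<Longrightarrow> a \<in> U \<Longrightarrow> covering_set X a \<subseteq> U"
  unfolding covering_set_def by auto

lemma cov_mem: "a \<in> topspace X \<Longrightarrow> a \<in> covering_set X a"
  unfolding covering_set_def by auto

lemma old_card: "old_point X n k a \<Longrightarrow> card (covering_set X a - {n}) < k"
  unfolding old_point_def m_system_def by auto

lemma new_card: "new_point X n k a \<Longrightarrow> card (covering_set X a - {n}) = k"
  unfolding new_point_def m_system_def by auto

lemma core:
  fixes X :: "nat topology" and n k :: nat and A R B S :: "nat set"
  assumes "n \<ge> 2" and ts: "topspace X = {1..n}" and "k \<ge> 1"
    and AS: "A \<subseteq> {1..n} - {n}" and RS: "R \<subseteq> {1..n} - {n}" "B \<subseteq> {1..n} - {n}" "S \<subseteq> {1..n} - {n}"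
    and "A \<inter> R = {}" "B \<inter> S = {}"
    and oA: "\<forall>a\<in>A. old_point X n k a" and oB: "\<forall>b\<in>B. old_point X n k b"
    and nR: "\<forall>r\<in>R. new_point X n k r" and nS: "\<forall>s\<in>S. new_point X n k s"
    and "R \<noteq> S"
    and s1: "new_k_system X n k (A \<union> R)" and s2: "new_k_system X n k (A \<union> R \<union> {n})"
    and s3: "new_k_system X n k (B \<union> S)" and s4: "new_k_system X n k (B \<union> S \<union> {n})"
  shows "openin X A \<and> openin X (A \<union> {n})"
proof -
  have fin: "finite (topspace X)" using ts by simp
  have nAR: "A \<union> R - {n} = A \<union> R" using AS RS by auto
  have op1: "openin X (A \<union> R)" and c1: "card (A \<union> R) = k"
    using s1 nAR unfolding new_k_system_def m_system_def by auto
  have op2: "openin X (A \<union> R \<union> {n})" using s2 unfolding new_k_system_def m_system_def by auto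
  have nBS: "B \<union> S - {n} = B \<union> S" using assms(6,7) by auto
  have c3: "card (B \<union> S) = k"
    using s3 nBS unfolding new_k_system_def m_system_def by auto
  have op4: "openin X (B \<union> S \<union> {n})" using s4 unfolding new_k_system_def m_system_def by auto
  have subA: "covering_set X a \<subseteq> A" if a: "a \<in> A" for a
  proof
    fix x assume x: "x \<in> covering_set X a"
    have aT: "a \<in> topspace X" using a AS ts by auto
    have "x \<in> A \<union> R" using cov_sub[OF op1, of a] a x by auto
    moreover have "x \<notin> R"
    proof
      assume xR: "x \<in> R"
      have xT: "x \<in> topspace X" using xR RS ts by auto
      have "covering_set X x \<subseteq> covering_set X a"
        by (rule cov_sub[OF cov_open[OF fin aT] x])
      moreover have "finite (covering_set X a)"
        using openin_subset[OF cov_open[OF fin aT]] fin finite_subset by blast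
      ultimately have "card (covering_set X x - {n}) \<le> card (covering_set X a - {n})"
        by (intro card_mono) auto
      thus False using old_card[of X n k a] new_card[of X n k x] oA nR a xR by auto
    qed
    ultimately show "x \<in> A" by auto
  qed
  have eqA: "A = \<Union> (covering_set X ` A)"
  proof
    show "\<Union> (covering_set X ` A) \<subseteq> A" using subA by blast
    show "A \<subseteq> \<Union> (covering_set X ` A)"
    proof
      fix a assume a: "a \<in> A"
      hence "a \<in> topspace X" using AS ts by auto
      hence "a \<in> covering_set X a" by (rule cov_mem)
      thus "a \<in> \<Union> (covering_set X ` A)" using a by blast
    qed
  qed
  have openA: "openin X A"
  proof (subst eqA, rule openin_Union)
    fix U assume "U \<in> covering_set X ` A"
    then obtain a where a: "a \<in> A" and U: "U = covering_set X a" by blast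
    have "a \<in> topspace X" using a AS ts by auto
    thus "openin X U" unfolding U by (rule cov_open[OF fin])
  qed
  have nT: "n \<in> topspace X" using ts assms(1) by auto
  define N where "N = covering_set X n"
  have opN: "openin X N" unfolding N_def by (rule cov_open[OF fin nT])
  have N1: "N \<subseteq> A \<union> R \<union> {n}" unfolding N_def by (rule cov_sub[OF op2]) auto
  have N2: "N \<subseteq> B \<union> S \<union> {n}" unfolding N_def by (rule cov_sub[OF op4]) auto
  have "N \<inter> R = {}"
  proof (rule ccontr)
    assume "N \<inter> R \<noteq> {}"
    then obtain r where rN: "r \<in> N" and rR: "r \<in> R" by auto
    have rsub: "covering_set X r \<subseteq> N" by (rule cov_sub[OF opN rN])
    let ?C = "covering_set X r - {n}"
    have ck: "card ?C = k" using new_card nR rR by auto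
    have C1: "?C \<subseteq> A \<union> R" using rsub N1 by auto
    have C2: "?C \<subseteq> B \<union> S" using rsub N2 by auto
    have fAR: "finite (A \<union> R)" using AS RS finite_subset[of "A \<union> R" "{1..n}"] by auto
    have fBS: "finite (B \<union> S)" using assms(6,7) finite_subset[of "B \<union> S" "{1..n}"] by auto
    have e1: "?C = A \<union> R" using card_subset_eq[OF fAR C1] ck c1 by auto
    have e2: "?C = B \<union> S" using card_subset_eq[OF fBS C2] ck c3 by auto
    have U: "A \<union> R = B \<union> S" using e1 e2 by simp
    have onn: "\<not> new_point X n k x" if "old_point X n k x" for x
      using old_card[OF that] new_card[of X n k x] by auto
    have "R = S"
    proof
      show "R \<subseteq> S"
      proof
        fix x assume "x \<in> R"
        hence "x \<in> B \<union> S" using U by auto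
        thus "x \<in> S" using onn oB nR \<open>x \<in> R\<close> by auto
      qed
      show "S \<subseteq> R"
      proof
        fix x assume "x \<in> S"
        hence "x \<in> A \<union> R" using U by auto
        thus "x \<in> R" using onn oA nS \<open>x \<in> S\<close> by auto
      qed
    qed
    thus False using \<open>R \<noteq> S\<close> by simp
  qed
  hence NA: "N \<subseteq> A \<union> {n}" using N1 by auto
  have "A \<union> {n} = A \<union> N" using NA cov_mem[OF nT] N_def by auto
  hence "openin X (A \<union> {n})" using openA opN by (simp add: openin_Un)
  thus ?thesis using openA by simp
qed

theorem lemma4:
  fixes X :: "nat topology" and n k :: nat and A R B S :: "nat set"
  assumes "n \<ge> 2" and "topspace X = {1..n}" and "k \<ge> 1"
    and "A \<subseteq> {1..n} - {n}" "R \<subseteq> {1..n} - {n}" "B \<subseteq> {1..n} - {n}" "S \<subseteq> {1..n} - {n}"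
    and "A \<inter> R = {}" "B \<inter> S = {}"
    and "\<forall>a\<in>A. old_point X n k a" "\<forall>b\<in>B. old_point X n k b"
    and "\<forall>r\<in>R. new_point X n k r" "\<forall>s\<in>S. new_point X n k s"
    and "R \<noteq> S"
    and "new_k_system X n k (A \<union> R)" "new_k_system X n k (A \<union> R \<union> {n})"
    and "new_k_system X n k (B \<union> S)" "new_k_system X n k (B \<union> S \<union> {n})"
  shows "openin X A \<and> openin X (A \<union> {n}) \<and> openin X B \<and> openin X (B \<union> {n})"
proof -
  have 1: "openin X A \<and> openin X (A \<union> {n})"
    by (rule core[OF assms])
  have RS': "S \<noteq> R" using assms(14) by simp
  have 2: "openin X B \<and> openin X (B \<union> {n})"
    by (rule core[OF assms(1-3) assms(6,7,4,5) assms(9,8) assms(11,10) assms(13,12) RS' assms(17,18,15,16)])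
  show ?thesis using 1 2 by simp
qed

end
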